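(* Let $(\boldsymbol X,Y)\sim\mathbb{P}_{\boldsymbol X,Y}$ with $\boldsymbol X\in\mathcal{X}\subset\mathbb{R}^{d_1\times d_2}$, $Y=f(\boldsymbol X)+\varepsilon$ where $f(\boldsymbol X)=\mathbb{E}(Y|\boldsymbol X)$, $f:\mathcal{X}\to[-1,1]$, $\varepsilon$ is a bounded mean-zero noise (possibly depending on $\boldsymbol X$) and $Y\in[-1,1]$. Fix $\pi\in[-1,1]$ and $r\in\mathbb{N}_+$, and suppose $f$ is $(r,\pi)$-sign representable. Then for every function $\bar f:\mathcal{X}\to\mathbb{R}$ with $\mathrm{sgn}\,\bar f=\mathrm{sgn}(f-\pi)$ on $\mathcal{X}$, we have $\mathrm{Risk}_\pi(\bar f)=\inf\{\mathrm{Risk}_\pi(\phi):\phi\in\Phi(r)\}$.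
   Context: Sign convention: $\mathrm{sgn}(x)=1$ if $x>0$ and $-1$ otherwise. $f$ is $(r,\pi)$-sign representable if there exist $\boldsymbol B\in\mathbb{R}^{d_1\times d_2}$ with $\mathrm{rank}(\boldsymbol B)\le r$ and $b\in\mathbb{R}$ such that $\mathrm{sgn}(f(\boldsymbol X)-\pi)=\mathrm{sgn}(\langle\boldsymbol X,\boldsymbol B\rangle+b)$ for all $\boldsymbol X\in\mathcal{X}$, with $\langle\boldsymbol X,\boldsymbol B\rangle=\mathrm{tr}(\boldsymbol X\boldsymbol B^T)$. $\Phi(r)=\{\phi:\boldsymbol X\mapsto\langle\boldsymbol X,\boldsymbol B\rangle+b\mid \mathrm{rank}(\boldsymbol B)\le r,\ (\boldsymbol B,b)\in\mathbb{R}^{d_1\times d_2}\times\mathbb{R}\}$. Weighted classification risk: $\mathrm{Risk}_\pi(\phi)=\frac12\mathbb{E}\big[|Y-\pi|\,|\mathrm{sgn}(Y-\pi)-\mathrm{sgn}\,\phi(\boldsymbol X)|\big]$, expectation over $(\boldsymbol X,Y)\sim\mathbb{P}_{\boldsymbol X,Y}$. *)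

theory Defs
  imports "HOL-Analysis.Analysis" "HOL-Probability.Probability"
begin

definition sgnp :: "real \<Rightarrow> real" where
  "sgnp x = (if x > 0 then 1 else -1)"

text \<open>Trace inner product of d1 x d2 matrices: tr(X B^T) = sum_ij X_ij B_ij.\<close>
definition mat_inner :: "real^'d2^'d1 \<Rightarrow> real^'d2^'d1 \<Rightarrow> real" where
  "mat_inner X B = (\<Sum>i\<in>UNIV. \<Sum>j\<in>UNIV. X $ i $ j * B $ i $ j)"

definition sign_representable ::
  "(real^'d2^'d1) set \<Rightarrow> (real^'d2^'d1 \<Rightarrow> real) \<Rightarrow> nat \<Rightarrow> real \<Rightarrow> bool" where
  "sign_representable S f r p \<longleftrightarrow>
     (\<exists>B b. rank B \<le> r \<and> (\<forall>X\<in>S. sgnp (f X - p) = sgnp (mat_inner X B + b)))"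

definition Phi :: "nat \<Rightarrow> (real^'d2^'d1 \<Rightarrow> real) set" where
  "Phi r = {\<phi>. \<exists>B b. rank B \<le> r \<and> \<phi> = (\<lambda>X. mat_inner X B + b)}"

definition risk ::
  "'a measure \<Rightarrow> ('a \<Rightarrow> real^'d2^'d1) \<Rightarrow> ('a \<Rightarrow> real) \<Rightarrow> real \<Rightarrow> (real^'d2^'d1 \<Rightarrow> real) \<Rightarrow> real" where
  "risk M X Y p \<phi> = (1/2) * (\<integral>\<omega>. \<bar>Y \<omega> - p\<bar> * \<bar>sgnp (Y \<omega> - p) - sgnp (\<phi> (X \<omega>))\<bar> \<partial>M)"

end

theory Submission
  imports Defs
begin

lemma sgnp_ind: "sgnp t = 2 * indicator {x. x > 0} t - 1"
  by (simp add: sgnp_def indicator_def)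

lemma risk_pointwise:
  "\<bar>y - p\<bar> * \<bar>sgnp (y - p) - sgnp t\<bar> = \<bar>y - p\<bar> - sgnp t * (y - p)"
  by (auto simp: sgnp_def)

lemma phi_borel:
  fixes B :: "real^'d2^'d1"
  shows "(\<lambda>X. mat_inner X B + b) \<in> borel_measurable borel"
proof -
  have "continuous_on UNIV (\<lambda>X::real^'d2^'d1. mat_inner X B + b)"
    unfolding mat_inner_def by (intro continuous_intros)
  then show ?thesis by (rule borel_measurable_continuous_onI)
qed

lemma key:
  fixes M :: "'a measure"
    and X :: "'a \<Rightarrow> real^'d2^'d1"
    and f :: "real^'d2^'d1 \<Rightarrow> real"
  assumes P: "prob_space M"
    and mX: "X \<in> borel_measurable M"
    and mY: "Y \<in> borel_measurable M"
    and XS: "\<forall>\<omega>\<in>space M. X \<omega> \<in> S"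
    and YB: "\<forall>\<omega>\<in>space M. Y \<omega> \<in> {-1..1}"
    and fS: "f ` S \<subseteq> {-1..1}"
    and mf: "f \<in> borel_measurable borel"
    and CE: "\<forall>A\<in>sets borel. (\<integral>\<omega>. Y \<omega> * indicator A (X \<omega>) \<partial>M)
                         = (\<integral>\<omega>. f (X \<omega>) * indicator A (X \<omega>) \<partial>M)"
    and mphi: "\<phi> \<in> borel_measurable borel"
  shows "risk M X Y p \<phi> = (1/2) * ((\<integral>\<omega>. \<bar>Y \<omega> - p\<bar> \<partial>M)
           - (\<integral>\<omega>. sgnp (\<phi> (X \<omega>)) * (f (X \<omega>) - p) \<partial>M))"
proof -
  interpret prob_space M by (rule P)
  define A where "A = {x. \<phi> x > 0}"
  have A: "A \<in> sets borel" unfolding A_def using mphi by measurable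
  define s where "s = (\<lambda>\<omega>. sgnp (\<phi> (X \<omega>)))"
  have ms: "s \<in> borel_measurable M" unfolding s_def sgnp_def using mphi mX by measurable
  have sb: "\<bar>s \<omega>\<bar> \<le> 1" for \<omega> by (simp add: s_def sgnp_def)
  have mfX: "(\<lambda>\<omega>. f (X \<omega>)) \<in> borel_measurable M" using mf mX by measurable
  have fXb: "\<bar>f (X \<omega>)\<bar> \<le> 1" if "\<omega> \<in> space M" for \<omega>
    using XS fS that by fastforce
  have Yb: "\<bar>Y \<omega>\<bar> \<le> 1" if "\<omega> \<in> space M" for \<omega>
    using YB that by fastforce
  have intb: "integrable M g" if "g \<in> borel_measurable M" "\<And>\<omega>. \<omega> \<in> space M \<Longrightarrow> \<bar>g \<omega>\<bar> \<le> B"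
    for g :: "'a \<Rightarrow> real" and B
    by (rule integrable_const_bound[where B=B]) (use that in auto)
  have iY: "integrable M Y" using intb[OF mY Yb] .
  have ifX: "integrable M (\<lambda>\<omega>. f (X \<omega>))" using intb[OF mfX fXb] .
  have iYA: "integrable M (\<lambda>\<omega>. Y \<omega> * indicator A (X \<omega>))"
    by (rule intb[of _ 1]) (use mY mX A Yb in \<open>auto simp: indicator_def\<close>)
  have ifA: "integrable M (\<lambda>\<omega>. f (X \<omega>) * indicator A (X \<omega>))"
    by (rule intb[of _ 1]) (use mfX mX A fXb in \<open>auto simp: indicator_def\<close>)
  have sY: "s \<omega> * Y \<omega> = 2 * (Y \<omega> * indicator A (X \<omega>)) - Y \<omega>" for \<omega>
    by (simp add: s_def sgnp_def A_def indicator_def)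
  have sf: "s \<omega> * f (X \<omega>) = 2 * (f (X \<omega>) * indicator A (X \<omega>)) - f (X \<omega>)" for \<omega>
    by (simp add: s_def sgnp_def A_def indicator_def)
  have EY: "(\<integral>\<omega>. Y \<omega> \<partial>M) = (\<integral>\<omega>. f (X \<omega>) \<partial>M)"
    using CE[rule_format, of UNIV] by simp
  have EA: "(\<integral>\<omega>. Y \<omega> * indicator A (X \<omega>) \<partial>M) = (\<integral>\<omega>. f (X \<omega>) * indicator A (X \<omega>) \<partial>M)"
    using CE A by blast
  have isY: "integrable M (\<lambda>\<omega>. s \<omega> * Y \<omega>)"
    by (rule intb[of _ 1]) (use ms mY Yb sb in \<open>auto simp: abs_mult intro: mult_le_one\<close>)
  have isf: "integrable M (\<lambda>\<omega>. s \<omega> * f (X \<omega>))"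
    by (rule intb[of _ 1]) (use ms mfX fXb sb in \<open>auto simp: abs_mult intro: mult_le_one\<close>)
  have "(\<integral>\<omega>. s \<omega> * Y \<omega> \<partial>M) = (\<integral>\<omega>. s \<omega> * f (X \<omega>) \<partial>M)"
    unfolding sY sf using iY ifX iYA ifA EY EA by simp
  then have E1: "(\<integral>\<omega>. s \<omega> * (Y \<omega> - p) \<partial>M) = (\<integral>\<omega>. s \<omega> * (f (X \<omega>) - p) \<partial>M)"
    using isY isf intb[OF ms sb] by (simp add: right_diff_distrib)
  have iaY: "integrable M (\<lambda>\<omega>. \<bar>Y \<omega> - p\<bar>)"
    using iY by auto
  have isYp: "integrable M (\<lambda>\<omega>. s \<omega> * (Y \<omega> - p))"
    using isY intb[OF ms sb] by (simp add: right_diff_distrib)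
  have "risk M X Y p \<phi> = (1/2) * (\<integral>\<omega>. \<bar>Y \<omega> - p\<bar> - s \<omega> * (Y \<omega> - p) \<partial>M)"
    unfolding risk_def s_def risk_pointwise ..
  also have "\<dots> = (1/2) * ((\<integral>\<omega>. \<bar>Y \<omega> - p\<bar> \<partial>M) - (\<integral>\<omega>. s \<omega> * (Y \<omega> - p) \<partial>M))"
    using iaY isYp by simp
  finally show ?thesis using E1 unfolding s_def by simp
qed

theorem theorem1:
  fixes M :: "'a measure"
    and X :: "'a \<Rightarrow> real^'d2^'d1"
    and Y :: "'a \<Rightarrow> real"
    and S :: "(real^'d2^'d1) set"
    and f :: "real^'d2^'d1 \<Rightarrow> real"
    and p :: real
    and r :: nat
  assumes "prob_space M"
    and "X \<in> borel_measurable M"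
    and "Y \<in> borel_measurable M"
    and "\<forall>\<omega>\<in>space M. X \<omega> \<in> S"
    and "\<forall>\<omega>\<in>space M. Y \<omega> \<in> {-1..1}"
    and "f ` S \<subseteq> {-1..1}"
    and "f \<in> borel_measurable borel"
    and "\<forall>A\<in>sets borel. (\<integral>\<omega>. Y \<omega> * indicator A (X \<omega>) \<partial>M)
                         = (\<integral>\<omega>. f (X \<omega>) * indicator A (X \<omega>) \<partial>M)"
    and "p \<in> {-1..1}"
    and "r \<ge> 1"
    and "sign_representable S f r p"
  shows "\<forall>fbar :: real^'d2^'d1 \<Rightarrow> real.
           (\<forall>x\<in>S. sgnp (fbar x) = sgnp (f x - p)) \<longrightarrow>
           risk M X Y p fbar = (INF \<phi>\<in>Phi r. risk M X Y p \<phi>)"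
proof (intro allI impI)
  fix fbar :: "real^'d2^'d1 \<Rightarrow> real"
  assume fb: "\<forall>x\<in>S. sgnp (fbar x) = sgnp (f x - p)"
  interpret prob_space M by (rule assms(1))
  note K = key[OF assms(1-8)]
  define F where "F = (\<lambda>x. f x - p)"
  have mF: "F \<in> borel_measurable borel" unfolding F_def using assms(7) by measurable
  have ifX: "integrable M (\<lambda>\<omega>. \<bar>f (X \<omega>) - p\<bar>)"
  proof (rule integrable_const_bound[where B=2])
    show "AE x in M. norm \<bar>f (X x) - p\<bar> \<le> 2"
      using assms(4,6,9) by (intro AE_I2) fastforce
    show "(\<lambda>\<omega>. \<bar>f (X \<omega>) - p\<bar>) \<in> borel_measurable M" using assms(2,7) by measurable
  qed
  have sgnabs: "sgnp t * t = \<bar>t\<bar>" for t by (simp add: sgnp_def)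
  have RF: "risk M X Y p F = (1/2) * ((\<integral>\<omega>. \<bar>Y \<omega> - p\<bar> \<partial>M) - (\<integral>\<omega>. \<bar>f (X \<omega>) - p\<bar> \<partial>M))"
    using K[OF mF, of p] unfolding F_def by (simp add: sgnabs)
  have low: "risk M X Y p F \<le> risk M X Y p \<phi>" if "\<phi> \<in> borel_measurable borel" for \<phi>
  proof -
    have im: "integrable M (\<lambda>\<omega>. sgnp (\<phi> (X \<omega>)) * (f (X \<omega>) - p))"
    proof (rule integrable_const_bound[where B=2])
      show "AE x in M. norm (sgnp (\<phi> (X x)) * (f (X x) - p)) \<le> 2"
        using assms(4,6,9) by (intro AE_I2) (fastforce simp: sgnp_def)
      show "(\<lambda>\<omega>. sgnp (\<phi> (X \<omega>)) * (f (X \<omega>) - p)) \<in> borel_measurable M"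
        unfolding sgnp_def using assms(2,7) that by measurable
    qed
    have "(\<integral>\<omega>. sgnp (\<phi> (X \<omega>)) * (f (X \<omega>) - p) \<partial>M) \<le> (\<integral>\<omega>. \<bar>f (X \<omega>) - p\<bar> \<partial>M)"
      by (rule integral_mono[OF im ifX]) (auto simp: sgnp_def)
    then show ?thesis unfolding RF K[OF that] by simp
  qed
  have eqF: "risk M X Y p g = risk M X Y p F"
    if "\<forall>x\<in>S. sgnp (g x) = sgnp (F x)" for g
  proof -
    have "(\<integral>\<omega>. \<bar>Y \<omega> - p\<bar> * \<bar>sgnp (Y \<omega> - p) - sgnp (g (X \<omega>))\<bar> \<partial>M) =
          (\<integral>\<omega>. \<bar>Y \<omega> - p\<bar> * \<bar>sgnp (Y \<omega> - p) - sgnp (F (X \<omega>))\<bar> \<partial>M)"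
      using that assms(4) by (intro Bochner_Integration.integral_cong) auto
    then show ?thesis unfolding risk_def by simp
  qed
  obtain B b where Bb: "rank B \<le> r" "\<forall>X\<in>S. sgnp (f X - p) = sgnp (mat_inner X B + b)"
    using assms(11) unfolding sign_representable_def by blast
  have phi0: "(\<lambda>X. mat_inner X B + b) \<in> Phi r" unfolding Phi_def using Bb(1) by blast
  have r0: "risk M X Y p (\<lambda>X. mat_inner X B + b) = risk M X Y p F"
    by (rule eqF) (use Bb(2) in \<open>simp add: F_def\<close>)
  have "(INF \<phi>\<in>Phi r. risk M X Y p \<phi>) = risk M X Y p F"
    unfolding image_def
  proof (rule cInf_eq_minimum)
    show "risk M X Y p F \<in> {y. \<exists>x\<in>Phi r. y = risk M X Y p x}"
      by (rule CollectI, rule bexI[where x="\<lambda>X. mat_inner X B + b"]) (use r0 phi0 in auto)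
    fix y assume "y \<in> {y. \<exists>x\<in>Phi r. y = risk M X Y p x}"
    then obtain \<phi> where "\<phi> \<in> Phi r" "y = risk M X Y p \<phi>" by blast
    then show "risk M X Y p F \<le> y"
      using low phi_borel unfolding Phi_def by auto
  qed
  moreover have "risk M X Y p fbar = risk M X Y p F"
    by (rule eqF) (use fb in \<open>simp add: F_def\<close>)
  ultimately show "risk M X Y p fbar = (INF \<phi>\<in>Phi r. risk M X Y p \<phi>)" by simp
qed

end
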